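(* Let $(x^k)_{k\in\mathcal{K}}\in\mathcal{X}=\prod_{k\in\mathcal{K}}\mathcal{X}^k$. The following statements are equivalent: (a) $(x^k)$ is bilevel feasible; (b) $\sum_{k\in\mathcal{K}}c^\top x^k=g\bigl(\sum_{k\in\mathcal{K}}x^k_{\mathcal{A}_1}\bigr)$; (c) each $x^k$ is individually bilevel feasible, and $g\bigl(\sum_{k\in\mathcal{K}}x^k_{\mathcal{A}_1}\bigr)=\sum_{k\in\mathcal{K}}g^k(x^k_{\mathcal{A}_1})$; (d) there exists $t\ge0$ such that $f(t)=\sum_{k\in\mathcal{K}}\bigl(c^\top x^k+t^\top x^k_{\mathcal{A}_1}\bigr)$; (e) there exists $t\ge0$ such that $f^k(t)=c^\top x^k+t^\top x^k_{\mathcal{A}_1}$ for all $k\in\mathcal{K}$.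
   Context: Multi-commodity network pricing setting: $G=(\mathcal{V},\mathcal{A})$ directed graph with arc costs $c\ge0$, nonempty tolled arc set $\mathcal{A}_1\subsetneq\mathcal{A}$, $n=|\mathcal{A}_1|$, $N$ node–arc incidence matrix; finite set $\mathcal{K}$ of commodities, commodity $k$ having origin $o^k$ and destination $d^k$ connected by a path of arcs not in $\mathcal{A}_1$; $b^k_{o^k}=1$, $b^k_{d^k}=-1$, other entries $0$; $\mathcal{X}^k=\{x\in\mathbb{R}^{\mathcal{A}}: Nx=b^k,\ x\ge0\}$; $x_{\mathcal{A}_1}$ is the restriction of $x$ to $\mathcal{A}_1$. For $t\in\mathbb{R}^n$ let $f^k(t)=\min\{c^\top x+t^\top x_{\mathcal{A}_1}: x\in\mathcal{X}^k\}$ if $t\ge0$ and $f^k(t)=-\infty$ otherwise; $f=\sum_{k\in\mathcal{K}}f^k$; $g^k(w)=\sup_{t\in\mathbb{R}^n}\{f^k(t)-t^\top w\}$ and $g(w)=\sup_{t\in\mathbb{R}^n}\{f(t)-t^\top w\}$. A composed reaction $(x^k)\in\mathcal{X}$ is bilevel feasible when $\sum_k c^\top x^k=g(\sum_k x^k_{\mathcal{A}_1})$. A single $x^k\in\mathcal{X}^k$ is individually bilevel feasible when the hyperplane $\{(t,z): z=-c^\top x^k-t^\top x^k_{\mathcal{A}_1}\}$ supports $\operatorname{epi}(-f^k)$ (i.e. $\operatorname{epi}(-f^k)$ lies in $\{z\ge -c^\top x^k-t^\top x^k_{\mathcal{A}_1}\}$ and meets the hyperplane). *)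

theory Defs
  imports Complex_Main "HOL-Library.Extended_Real"
begin

text \<open>Vectors in R^A are functions 'a => real vanishing outside arcs; toll vectors in R^n
  (n = |A1|) are represented by functions 'a => real of which only the values on A1 matter.\<close>

record ('v,'a,'k) net =
  verts :: "'v set"
  arcs :: "'a set"
  tail :: "'a \<Rightarrow> 'v"
  head :: "'a \<Rightarrow> 'v"
  cost :: "'a \<Rightarrow> real"
  tolled :: "'a set"
  comms :: "'k set"
  orig :: "'k \<Rightarrow> 'v"
  dest :: "'k \<Rightarrow> 'v"

fun toll_free_walk :: "('v,'a,'k) net \<Rightarrow> 'v \<Rightarrow> 'a list \<Rightarrow> 'v \<Rightarrow> bool" where
  "toll_free_walk G u [] v \<longleftrightarrow> u = v"
| "toll_free_walk G u (a # p) v \<longleftrightarrow>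
     a \<in> arcs G - tolled G \<and> tail G a = u \<and> toll_free_walk G (head G a) p v"

definition pricing_instance :: "('v,'a,'k) net \<Rightarrow> bool" where
  "pricing_instance G \<longleftrightarrow>
     finite (verts G) \<and> finite (arcs G) \<and>
     (\<forall>a\<in>arcs G. tail G a \<in> verts G \<and> head G a \<in> verts G) \<and>
     (\<forall>a\<in>arcs G. 0 \<le> cost G a) \<and>
     tolled G \<noteq> {} \<and> tolled G \<subset> arcs G \<and>
     finite (comms G) \<and>
     (\<forall>k\<in>comms G. orig G k \<in> verts G \<and> dest G k \<in> verts G \<and> orig G k \<noteq> dest G k \<and>
        (\<exists>p. toll_free_walk G (orig G k) p (dest G k)))"

definition incidence :: "('v,'a,'k) net \<Rightarrow> 'v \<Rightarrow> 'a \<Rightarrow> real" where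
  "incidence G v a = (if tail G a = v then 1 else 0) - (if head G a = v then 1 else 0)"

definition demand_rhs :: "('v,'a,'k) net \<Rightarrow> 'k \<Rightarrow> 'v \<Rightarrow> real" where
  "demand_rhs G k v = (if v = orig G k then 1 else if v = dest G k then -1 else 0)"

definition flows :: "('v,'a,'k) net \<Rightarrow> 'k \<Rightarrow> ('a \<Rightarrow> real) set" where
  "flows G k = {x. (\<forall>a. a \<notin> arcs G \<longrightarrow> x a = 0) \<and>
                   (\<forall>v\<in>verts G. (\<Sum>a\<in>arcs G. incidence G v a * x a) = demand_rhs G k v) \<and>
                   (\<forall>a\<in>arcs G. 0 \<le> x a)}"

definition ccost :: "('v,'a,'k) net \<Rightarrow> ('a \<Rightarrow> real) \<Rightarrow> real" where
  "ccost G x = (\<Sum>a\<in>arcs G. cost G a * x a)"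

definition toll :: "('v,'a,'k) net \<Rightarrow> ('a \<Rightarrow> real) \<Rightarrow> ('a \<Rightarrow> real) \<Rightarrow> real" where
  "toll G t x = (\<Sum>a\<in>tolled G. t a * x a)"

definition nonneg_toll :: "('v,'a,'k) net \<Rightarrow> ('a \<Rightarrow> real) \<Rightarrow> bool" where
  "nonneg_toll G t \<longleftrightarrow> (\<forall>a\<in>tolled G. 0 \<le> t a)"

text \<open>f^k (the minimum, written as an infimum in the extended reals), f, g^k, g.\<close>
definition fk :: "('v,'a,'k) net \<Rightarrow> 'k \<Rightarrow> ('a \<Rightarrow> real) \<Rightarrow> ereal" where
  "fk G k t = (if nonneg_toll G t
               then (INF x\<in>flows G k. ereal (ccost G x + toll G t x))
               else -\<infinity>)"

definition ff :: "('v,'a,'k) net \<Rightarrow> ('a \<Rightarrow> real) \<Rightarrow> ereal" where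
  "ff G t = (\<Sum>k\<in>comms G. fk G k t)"

definition gk :: "('v,'a,'k) net \<Rightarrow> 'k \<Rightarrow> ('a \<Rightarrow> real) \<Rightarrow> ereal" where
  "gk G k w = (SUP t. fk G k t - ereal (toll G t w))"

definition gg :: "('v,'a,'k) net \<Rightarrow> ('a \<Rightarrow> real) \<Rightarrow> ereal" where
  "gg G w = (SUP t. ff G t - ereal (toll G t w))"

definition aggr :: "('v,'a,'k) net \<Rightarrow> ('k \<Rightarrow> 'a \<Rightarrow> real) \<Rightarrow> 'a \<Rightarrow> real" where
  "aggr G x = (\<lambda>a. \<Sum>k\<in>comms G. x k a)"

definition bilevel_feasible :: "('v,'a,'k) net \<Rightarrow> ('k \<Rightarrow> 'a \<Rightarrow> real) \<Rightarrow> bool" where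
  "bilevel_feasible G x \<longleftrightarrow>
     (\<forall>k\<in>comms G. x k \<in> flows G k) \<and>
     ereal (\<Sum>k\<in>comms G. ccost G (x k)) = gg G (aggr G x)"

definition epi_neg_fk :: "('v,'a,'k) net \<Rightarrow> 'k \<Rightarrow> (('a \<Rightarrow> real) \<times> real) set" where
  "epi_neg_fk G k = {(t, z). - fk G k t \<le> ereal z}"

definition indiv_bilevel_feasible :: "('v,'a,'k) net \<Rightarrow> 'k \<Rightarrow> ('a \<Rightarrow> real) \<Rightarrow> bool" where
  "indiv_bilevel_feasible G k y \<longleftrightarrow>
     y \<in> flows G k \<and>
     epi_neg_fk G k \<subseteq> {(t, z). z \<ge> - ccost G y - toll G t y} \<and>
     epi_neg_fk G k \<inter> {(t, z). z = - ccost G y - toll G t y} \<noteq> {}"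

end

theory Submission
  imports Defs
begin


definition lpl :: "'i set \<Rightarrow> ('i \<Rightarrow> real) \<Rightarrow> ('i \<Rightarrow> real) \<Rightarrow> real" where
  "lpl I h u = (\<Sum>i\<in>I. h i * u i)"

definition lpfeas :: "'i set \<Rightarrow> (('i \<Rightarrow> real) \<times> real) set \<Rightarrow> ('i \<Rightarrow> real) \<Rightarrow> bool" where
  "lpfeas I J u \<longleftrightarrow> (\<forall>i. i \<notin> I \<longrightarrow> u i = 0) \<and> (\<forall>hr\<in>J. lpl I (fst hr) u \<le> snd hr)"

definition lptight :: "'i set \<Rightarrow> (('i \<Rightarrow> real) \<times> real) set \<Rightarrow> ('i \<Rightarrow> real) \<Rightarrow> (('i \<Rightarrow> real) \<times> real) set" where
  "lptight I J u = {hr\<in>J. lpl I (fst hr) u = snd hr}"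

definition lpbasic :: "'i set \<Rightarrow> (('i \<Rightarrow> real) \<times> real) set \<Rightarrow> ('i \<Rightarrow> real) \<Rightarrow> bool" where
  "lpbasic I J u \<longleftrightarrow> (\<forall>d. (\<forall>i. i \<notin> I \<longrightarrow> d i = 0) \<and> (\<forall>hr\<in>lptight I J u. lpl I (fst hr) d = 0) \<longrightarrow> d = (\<lambda>i. 0))"

lemma lpl_comb: "lpl I h (\<lambda>i. u i + s * e i) = lpl I h u + s * lpl I h e"
  unfolding lpl_def by (simp add: sum.distrib sum_distrib_left algebra_simps)

lemma lpl_diff: "lpl I h (\<lambda>i. u i - v i) = lpl I h u - lpl I h v"
  unfolding lpl_def by (simp add: sum_subtractf algebra_simps)

lemma lpl_neg: "lpl I h (\<lambda>i. - u i) = - lpl I h u"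
  unfolding lpl_def by (simp add: sum_negf)

lemma lp_basic_finite:
  assumes "finite J"
  shows "finite {u. lpfeas I J u \<and> lpbasic I J u}"
proof -
  let ?S = "{u. lpfeas I J u \<and> lpbasic I J u}"
  have "inj_on (lptight I J) ?S"
  proof (rule inj_onI)
    fix u v assume u: "u \<in> ?S" and v: "v \<in> ?S" and eq: "lptight I J u = lptight I J v"
    have z: "\<forall>i. i \<notin> I \<longrightarrow> u i - v i = 0" using u v by (simp add: lpfeas_def)
    have o: "\<forall>hr\<in>lptight I J u. lpl I (fst hr) (\<lambda>i. u i - v i) = 0"
    proof
      fix hr assume h: "hr \<in> lptight I J u"
      then have "hr \<in> lptight I J v" using eq by simp
      with h show "lpl I (fst hr) (\<lambda>i. u i - v i) = 0" by (simp add: lptight_def lpl_diff)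
    qed
    have b: "lpbasic I J u" using u by simp
    have "(\<lambda>i. u i - v i) = (\<lambda>i. 0)" using b z o unfolding lpbasic_def by (elim allE[of _ "\<lambda>i. u i - v i"]) simp
    then have "\<And>i. u i - v i = 0" by (simp add: fun_eq_iff)
    then show "u = v" by (simp add: fun_eq_iff)
  qed
  moreover have "lptight I J ` ?S \<subseteq> Pow J" by (auto simp: lptight_def)
  ultimately show ?thesis using inj_on_finite assms by blast
qed

lemma lp_dominate:
  assumes fJ: "finite J"
    and pointed: "\<And>d. (\<forall>i. i \<notin> I \<longrightarrow> d i = 0) \<Longrightarrow> (\<forall>hr\<in>J. lpl I (fst hr) d = 0) \<Longrightarrow> d = (\<lambda>i. 0)"
    and bnd: "\<And>u. lpfeas I J u \<Longrightarrow> lpl I p u \<le> B"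
  shows "lpfeas I J u \<Longrightarrow> \<exists>u'. lpfeas I J u' \<and> lpbasic I J u' \<and> lpl I p u \<le> lpl I p u'"
proof (induction "card (J - lptight I J u)" arbitrary: u rule: less_induct)
  case less
  show ?case
  proof (cases "lpbasic I J u")
    case True then show ?thesis using less.prems by blast
  next
    case False
    then obtain d where dz: "\<forall>i. i \<notin> I \<longrightarrow> d i = 0"
      and dt: "\<forall>hr\<in>lptight I J u. lpl I (fst hr) d = 0" and dnz: "d \<noteq> (\<lambda>i. 0)"
      unfolding lpbasic_def by blast
    from pointed[OF dz] dnz obtain hr0 where hr0: "hr0 \<in> J" "lpl I (fst hr0) d \<noteq> 0" by blast
    have sub: "\<exists>e. (\<forall>i. i \<notin> I \<longrightarrow> e i = 0) \<and> (\<forall>hr\<in>lptight I J u. lpl I (fst hr) e = 0)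
                 \<and> lpl I p e \<ge> 0 \<and> (\<exists>hr\<in>J. lpl I (fst hr) e > 0)"
      if ez: "\<forall>i. i \<notin> I \<longrightarrow> e i = 0" and et: "\<forall>hr\<in>lptight I J u. lpl I (fst hr) e = 0"
        and ep: "lpl I p e \<ge> 0" and enz: "lpl I (fst hr0) e \<noteq> 0" for e
    proof (cases "\<exists>hr\<in>J. lpl I (fst hr) e > 0")
      case True then show ?thesis using ez et ep by blast
    next
      case False
      hence neg: "\<forall>hr\<in>J. lpl I (fst hr) e \<le> 0" by (auto simp: not_less)
      have ray: "lpfeas I J (\<lambda>i. u i + s * e i)" if s0: "s \<ge> 0" for s
      proof -
        have "\<forall>hr\<in>J. lpl I (fst hr) (\<lambda>i. u i + s * e i) \<le> snd hr"
        proof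
          fix hr assume hr: "hr \<in> J"
          have "s * lpl I (fst hr) e \<le> 0" using neg hr s0 by (simp add: mult_nonneg_nonpos)
          moreover have "lpl I (fst hr) u \<le> snd hr" using less.prems hr by (simp add: lpfeas_def)
          ultimately show "lpl I (fst hr) (\<lambda>i. u i + s * e i) \<le> snd hr" by (simp add: lpl_comb)
        qed
        then show ?thesis using less.prems ez by (simp add: lpfeas_def)
      qed
      have "lpl I p e \<le> 0"
      proof (rule ccontr)
        assume "\<not> ?thesis" hence pos: "lpl I p e > 0" by simp
        define s where "s = (B - lpl I p u + 1) / lpl I p e"
        have "lpl I p u \<le> B" using bnd less.prems by blast
        hence "s \<ge> 0" using pos by (simp add: s_def)
        then have "lpl I p (\<lambda>i. u i + s * e i) \<le> B" by (rule bnd[OF ray])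
        moreover have "lpl I p (\<lambda>i. u i + s * e i) = lpl I p u + s * lpl I p e" by (rule lpl_comb)
        moreover have "lpl I p u + s * lpl I p e = B + 1" using pos by (simp add: s_def)
        ultimately show False by simp
      qed
      hence p0: "lpl I p e = 0" using ep by simp
      have "lpl I (fst hr0) e < 0" using neg hr0(1) enz by force
      then show ?thesis using ez et p0 hr0(1)
        by (intro exI[of _ "\<lambda>i. - e i"]) (auto simp: lpl_neg)
    qed
    have "\<exists>e. (\<forall>i. i \<notin> I \<longrightarrow> e i = 0) \<and> (\<forall>hr\<in>lptight I J u. lpl I (fst hr) e = 0)
                 \<and> lpl I p e \<ge> 0 \<and> (\<exists>hr\<in>J. lpl I (fst hr) e > 0)"
    proof (cases "lpl I p d \<ge> 0")
      case True then show ?thesis using sub[of d] dz dt hr0 by blast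
    next
      case False then show ?thesis using sub[of "\<lambda>i. - d i"] dz dt hr0 by (simp add: lpl_neg)
    qed
    then obtain e where ez: "\<forall>i. i \<notin> I \<longrightarrow> e i = 0" and et: "\<forall>hr\<in>lptight I J u. lpl I (fst hr) e = 0"
      and ep: "lpl I p e \<ge> 0" and epos: "\<exists>hr\<in>J. lpl I (fst hr) e > 0" by blast
    define P where "P = {hr\<in>J. lpl I (fst hr) e > 0}"
    define ratio where "ratio hr = (snd hr - lpl I (fst hr) u) / lpl I (fst hr) e" for hr
    have fP: "finite P" using fJ by (simp add: P_def)
    have neP: "P \<noteq> {}" using epos by (auto simp: P_def)
    define s where "s = Min (ratio ` P)"
    have "s \<in> ratio ` P" unfolding s_def using fP neP by (intro Min_in) auto
    then obtain hr1 where hr1: "hr1 \<in> P" "ratio hr1 = s" by auto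
    have Pnt: "lpl I (fst hr) u < snd hr" if "hr \<in> P" for hr
    proof -
      have "lpl I (fst hr) u \<le> snd hr" using less.prems that by (simp add: lpfeas_def P_def)
      moreover have "hr \<notin> lptight I J u" using et that by (auto simp: P_def)
      ultimately show ?thesis using that by (auto simp: lptight_def P_def)
    qed
    have spos: "s > 0" using hr1 Pnt[OF hr1(1)] by (auto simp: ratio_def P_def)
    have sle: "s \<le> ratio hr" if "hr \<in> P" for hr using fP that by (simp add: s_def)
    define u' where "u' = (\<lambda>i. u i + s * e i)"
    have feas': "lpfeas I J u'"
    proof -
      have "\<forall>hr\<in>J. lpl I (fst hr) u' \<le> snd hr"
      proof
        fix hr assume hr: "hr \<in> J"
        have lu: "lpl I (fst hr) u \<le> snd hr" using less.prems hr by (simp add: lpfeas_def)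
        show "lpl I (fst hr) u' \<le> snd hr"
        proof (cases "lpl I (fst hr) e > 0")
          case True
          then have "hr \<in> P" using hr by (simp add: P_def)
          then have "s \<le> (snd hr - lpl I (fst hr) u) / lpl I (fst hr) e" using sle by (simp add: ratio_def)
          then have "s * lpl I (fst hr) e \<le> snd hr - lpl I (fst hr) u" using True by (simp add: pos_le_divide_eq)
          then show ?thesis by (simp add: u'_def lpl_comb)
        next
          case False
          then have "s * lpl I (fst hr) e \<le> 0" using spos by (simp add: mult_nonneg_nonpos)
          then show ?thesis using lu by (simp add: u'_def lpl_comb)
        qed
      qed
      then show ?thesis using less.prems ez by (simp add: lpfeas_def u'_def)
    qed
    have tsub: "lptight I J u \<subseteq> lptight I J u'"
      using et by (auto simp: lptight_def u'_def lpl_comb)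
    have h1t: "hr1 \<in> lptight I J u'"
    proof -
      have "lpl I (fst hr1) e > 0" using hr1 by (simp add: P_def)
      have "lpl I (fst hr1) u' = lpl I (fst hr1) u + s * lpl I (fst hr1) e"
        unfolding u'_def by (rule lpl_comb)
      also have "\<dots> = snd hr1" using hr1(2)[symmetric] \<open>lpl I (fst hr1) e > 0\<close>
        by (simp add: ratio_def)
      finally have "lpl I (fst hr1) u' = snd hr1" .
      then show ?thesis using hr1 by (simp add: lptight_def P_def)
    qed
    have h1n: "hr1 \<notin> lptight I J u" using Pnt[OF hr1(1)] by (simp add: lptight_def)
    have "J - lptight I J u' \<subset> J - lptight I J u"
      using tsub h1t h1n hr1(1) by (auto simp: P_def)
    then have lt: "card (J - lptight I J u') < card (J - lptight I J u)"
      using fJ by (meson finite_Diff psubset_card_mono)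
    have pu: "lpl I p u \<le> lpl I p u'" using spos ep by (simp add: u'_def lpl_comb)
    from less.hyps[OF lt feas'] obtain u'' where "lpfeas I J u''" "lpbasic I J u''" "lpl I p u' \<le> lpl I p u''"
      by blast
    with pu show ?thesis by (intro exI[of _ u'']) auto
  qed
qed

lemma lp_max:
  assumes fJ: "finite J"
    and pointed: "\<And>d. (\<forall>i. i \<notin> I \<longrightarrow> d i = 0) \<Longrightarrow> (\<forall>hr\<in>J. lpl I (fst hr) d = 0) \<Longrightarrow> d = (\<lambda>i. 0)"
    and bnd: "\<And>u. lpfeas I J u \<Longrightarrow> lpl I p u \<le> B"
    and u0: "lpfeas I J u0"
  shows "\<exists>u. lpfeas I J u \<and> (\<forall>v. lpfeas I J v \<longrightarrow> lpl I p v \<le> lpl I p u)"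
proof -
  let ?S = "{u. lpfeas I J u \<and> lpbasic I J u}"
  have fin: "finite ?S" using lp_basic_finite[OF fJ] .
  have dom: "\<And>v. lpfeas I J v \<Longrightarrow> \<exists>u'\<in>?S. lpl I p v \<le> lpl I p u'"
    using lp_dominate[OF fJ pointed bnd] by blast
  have ne: "?S \<noteq> {}" using dom[OF u0] by blast
  have "Max (lpl I p ` ?S) \<in> lpl I p ` ?S" using fin ne by (intro Max_in) auto
  then obtain u where u: "u \<in> ?S" "lpl I p u = Max (lpl I p ` ?S)" by (auto simp del: Max_in)
  have "\<forall>v. lpfeas I J v \<longrightarrow> lpl I p v \<le> lpl I p u"
  proof (intro allI impI)
    fix v assume "lpfeas I J v"
    then obtain u' where "u' \<in> ?S" "lpl I p v \<le> lpl I p u'" using dom by blast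
    moreover have "lpl I p u' \<le> lpl I p u" using u fin \<open>u' \<in> ?S\<close> by simp
    ultimately show "lpl I p v \<le> lpl I p u" by simp
  qed
  then show ?thesis using u by blast
qed



definition fJ :: "('v,'a,'k) net \<Rightarrow> 'k \<Rightarrow> (('a \<Rightarrow> real) \<times> real) set" where
 "fJ G k = (\<lambda>v. (incidence G v, demand_rhs G k v)) ` verts G
         \<union> (\<lambda>v. (\<lambda>a. - incidence G v a, - demand_rhs G k v)) ` verts G
         \<union> (\<lambda>a. (\<lambda>a'. if a' = a then -1 else 0, 0)) ` arcs G"

definition bsol :: "('v,'a,'k) net \<Rightarrow> 'k \<Rightarrow> ('a \<Rightarrow> real) set" where
  "bsol G k = {u. lpfeas (arcs G) (fJ G k) u \<and> lpbasic (arcs G) (fJ G k) u}"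

lemma fJ_finite: "pricing_instance G \<Longrightarrow> finite (fJ G k)"
  unfolding fJ_def pricing_instance_def by auto

lemma lpl_unit: "finite A \<Longrightarrow> a \<in> A \<Longrightarrow> lpl A (\<lambda>a'. if a' = a then -1 else 0) y = - y a"
proof -
  assume fA: "finite A" and aA: "a \<in> A"
  have "lpl A (\<lambda>a'. if a' = a then -1 else 0) y = (\<Sum>a'\<in>A. if a' = a then - y a' else 0)"
    unfolding lpl_def by (rule sum.cong) auto
  also have "\<dots> = - y a" using fA aA by (simp add: sum.delta)
  finally show ?thesis .
qed

lemma lpl_neg_h: "lpl A (\<lambda>a. - h a) y = - lpl A h y"
  unfolding lpl_def by (simp add: sum_negf)

lemma flows_lpfeas:
  assumes inst: "pricing_instance G"
  shows "lpfeas (arcs G) (fJ G k) y \<longleftrightarrow> y \<in> flows G k"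
proof -
  have fa: "finite (arcs G)" using inst by (simp add: pricing_instance_def)
  have e: "(\<forall>hr\<in>fJ G k. lpl (arcs G) (fst hr) y \<le> snd hr) \<longleftrightarrow>
     (\<forall>v\<in>verts G. lpl (arcs G) (incidence G v) y = demand_rhs G k v) \<and> (\<forall>a\<in>arcs G. 0 \<le> y a)"
  proof
    assume H: "\<forall>hr\<in>fJ G k. lpl (arcs G) (fst hr) y \<le> snd hr"
    have "lpl (arcs G) (incidence G v) y = demand_rhs G k v" if v: "v \<in> verts G" for v
    proof -
      have "(incidence G v, demand_rhs G k v) \<in> fJ G k"
        "((\<lambda>a. - incidence G v a), - demand_rhs G k v) \<in> fJ G k" using v unfolding fJ_def by blast+
      then have "lpl (arcs G) (incidence G v) y \<le> demand_rhs G k v"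
        "lpl (arcs G) (\<lambda>a. - incidence G v a) y \<le> - demand_rhs G k v" using H by fastforce+
      then show ?thesis unfolding lpl_neg_h by simp
    qed
    moreover have "0 \<le> y a" if a: "a \<in> arcs G" for a
    proof -
      have "((\<lambda>a'. if a' = a then -1 else 0), 0) \<in> fJ G k" using a unfolding fJ_def by blast
      then have "lpl (arcs G) (\<lambda>a'. if a' = a then -1 else 0) y \<le> 0" using H by fastforce
      then show ?thesis using lpl_unit[OF fa a] by simp
    qed
    ultimately show "(\<forall>v\<in>verts G. lpl (arcs G) (incidence G v) y = demand_rhs G k v) \<and> (\<forall>a\<in>arcs G. 0 \<le> y a)"
      by blast
  next
    assume H: "(\<forall>v\<in>verts G. lpl (arcs G) (incidence G v) y = demand_rhs G k v) \<and> (\<forall>a\<in>arcs G. 0 \<le> y a)"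
    show "\<forall>hr\<in>fJ G k. lpl (arcs G) (fst hr) y \<le> snd hr"
      unfolding fJ_def using H by (auto simp: lpl_unit[OF fa] lpl_neg_h)
  qed
  show ?thesis using e unfolding lpfeas_def flows_def lpl_def by auto
qed

lemma ccost_nonneg: "pricing_instance G \<Longrightarrow> y \<in> flows G k \<Longrightarrow> 0 \<le> ccost G y"
  unfolding ccost_def pricing_instance_def flows_def by (auto intro!: sum_nonneg)

lemma toll_nonneg: "pricing_instance G \<Longrightarrow> y \<in> flows G k \<Longrightarrow> nonneg_toll G t \<Longrightarrow> 0 \<le> toll G t y"
  unfolding toll_def pricing_instance_def flows_def nonneg_toll_def by (auto intro!: sum_nonneg)

lemma lpl_obj:
  assumes inst: "pricing_instance G"
  shows "lpl (arcs G) (\<lambda>a. - (cost G a + (if a \<in> tolled G then t a else 0))) y = - (ccost G y + toll G t y)"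
proof -
  have fa: "finite (arcs G)" and sub: "tolled G \<subseteq> arcs G" using inst by (auto simp: pricing_instance_def)
  have "(\<Sum>a\<in>arcs G. (if a \<in> tolled G then t a else 0) * y a) = (\<Sum>a\<in>tolled G. t a * y a)"
    using fa sub by (intro sum.mono_neutral_cong_right) auto
  moreover have "lpl (arcs G) (\<lambda>a. - (cost G a + (if a \<in> tolled G then t a else 0))) y
     = (\<Sum>a\<in>arcs G. - (cost G a * y a + (if a \<in> tolled G then t a else 0) * y a))"
    unfolding lpl_def by (rule sum.cong) (simp_all add: algebra_simps)
  moreover have "\<dots> = - ((\<Sum>a\<in>arcs G. cost G a * y a) + (\<Sum>a\<in>arcs G. (if a \<in> tolled G then t a else 0) * y a))"
    by (simp add: sum_negf sum_subtractf)
  ultimately show ?thesis unfolding ccost_def toll_def by simp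
qed

lemma bsol_fin: "pricing_instance G \<Longrightarrow> finite (bsol G k)"
proof -
  assume "pricing_instance G"
  then have "finite (fJ G k)" by (rule fJ_finite)
  then show ?thesis unfolding bsol_def by (rule lp_basic_finite)
qed

lemma bsol_sub: "pricing_instance G \<Longrightarrow> bsol G k \<subseteq> flows G k"
proof
  fix u assume "pricing_instance G" "u \<in> bsol G k"
  then show "u \<in> flows G k" unfolding bsol_def using flows_lpfeas[of G k u] by simp
qed

lemma bsol_dom:
  assumes inst: "pricing_instance G" and t: "nonneg_toll G t" and y: "y \<in> flows G k"
  shows "\<exists>y'\<in>bsol G k. ccost G y' + toll G t y' \<le> ccost G y + toll G t y"
proof -
  let ?p = "\<lambda>a. - (cost G a + (if a \<in> tolled G then t a else 0))"
  have pointed: "d = (\<lambda>i. 0)" if "\<forall>i. i \<notin> arcs G \<longrightarrow> d i = 0"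
      "\<forall>hr\<in>fJ G k. lpl (arcs G) (fst hr) d = 0" for d
  proof -
    have fa: "finite (arcs G)" using inst by (simp add: pricing_instance_def)
    have "d a = 0" for a
    proof (cases "a \<in> arcs G")
      case True
      then have "(\<lambda>a'. if a' = a then -1 else 0, 0) \<in> fJ G k" unfolding fJ_def by blast
      then have "lpl (arcs G) (\<lambda>a'. if a' = a then -1 else 0) d = 0" using that(2) by fastforce
      then show ?thesis using lpl_unit[OF fa True] by simp
    next
      case False then show ?thesis using that(1) by simp
    qed
    then show ?thesis by (simp add: fun_eq_iff)
  qed
  have bnd: "lpl (arcs G) ?p u \<le> 0" if "lpfeas (arcs G) (fJ G k) u" for u
  proof -
    have "u \<in> flows G k" using that flows_lpfeas[OF inst] by blast
    then have "0 \<le> ccost G u" "0 \<le> toll G t u" using ccost_nonneg[OF inst] toll_nonneg[OF inst _ t] by blast+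
    then show ?thesis unfolding lpl_obj[OF inst] by simp
  qed
  have "lpfeas (arcs G) (fJ G k) y" using y flows_lpfeas[OF inst] by blast
  from lp_dominate[OF fJ_finite[OF inst] pointed bnd this]
  obtain y' where "lpfeas (arcs G) (fJ G k) y'" "lpbasic (arcs G) (fJ G k) y'"
    "lpl (arcs G) ?p y \<le> lpl (arcs G) ?p y'" by blast
  then show ?thesis unfolding bsol_def lpl_obj[OF inst] by auto
qed

definition mval :: "('v,'a,'k) net \<Rightarrow> 'k \<Rightarrow> ('a \<Rightarrow> real) \<Rightarrow> real" where
  "mval G k t = Min ((\<lambda>y. ccost G y + toll G t y) ` bsol G k)"

lemma mval:
  assumes inst: "pricing_instance G" and y0: "y0 \<in> flows G k" and t: "nonneg_toll G t"
  shows "fk G k t = ereal (mval G k t)"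
    and "\<And>y. y \<in> flows G k \<Longrightarrow> mval G k t \<le> ccost G y + toll G t y"
    and "\<exists>y\<in>bsol G k. mval G k t = ccost G y + toll G t y"
proof -
  let ?h = "\<lambda>y. ccost G y + toll G t y"
  have fin: "finite (bsol G k)" by (rule bsol_fin[OF inst])
  have ne: "bsol G k \<noteq> {}" using bsol_dom[OF inst t y0] by blast
  have "mval G k t \<in> ?h ` bsol G k" unfolding mval_def using fin ne by (intro Min_in) auto
  then show ex: "\<exists>y\<in>bsol G k. mval G k t = ccost G y + toll G t y" by auto
  show le: "mval G k t \<le> ccost G y + toll G t y" if yf: "y \<in> flows G k" for y
  proof -
    obtain y' where "y' \<in> bsol G k" "?h y' \<le> ?h y" using bsol_dom[OF inst t yf] by blast
    moreover have "mval G k t \<le> ?h y'" unfolding mval_def using fin \<open>y' \<in> bsol G k\<close> by simp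
    ultimately show ?thesis by simp
  qed
  obtain ym where ym: "ym \<in> bsol G k" "mval G k t = ?h ym" using ex by blast
  have ymf: "ym \<in> flows G k" using ym(1) bsol_sub[OF inst] by blast
  have "(INF y\<in>flows G k. ereal (?h y)) = ereal (mval G k t)"
  proof (rule order.antisym)
    show "(INF y\<in>flows G k. ereal (?h y)) \<le> ereal (mval G k t)"
      using INF_lower[OF ymf, of "\<lambda>y. ereal (?h y)"] ym(2) by simp
    show "ereal (mval G k t) \<le> (INF y\<in>flows G k. ereal (?h y))"
      using le by (auto intro!: INF_greatest)
  qed
  then show "fk G k t = ereal (mval G k t)" using t by (simp add: fk_def)
qed



definition J2 :: "('v,'a,'k) net \<Rightarrow> ((('k + 'a) \<Rightarrow> real) \<times> real) set" where
 "J2 G = (\<lambda>a. (\<lambda>i. if i = Inr a then -1 else 0, 0)) ` tolled G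
       \<union> (\<lambda>ky. (\<lambda>i. case i of Inl k' \<Rightarrow> (if k' = fst ky then 1 else 0) | Inr a \<Rightarrow> - snd ky a,
                ccost G (snd ky))) ` (SIGMA k:comms G. bsol G k)"

definition tv :: "('k + 'a \<Rightarrow> real) \<Rightarrow> 'a \<Rightarrow> real" where "tv u = (\<lambda>a. u (Inr a))"

lemma lpl_Plus:
  "finite C \<Longrightarrow> finite T \<Longrightarrow>
   lpl (C <+> T) h u = (\<Sum>k\<in>C. h (Inl k) * u (Inl k)) + (\<Sum>a\<in>T. h (Inr a) * u (Inr a))"
  unfolding lpl_def by (simp add: sum.Plus comp_def)

lemma J2_finite: "pricing_instance G \<Longrightarrow> finite (J2 G)"
proof -
  assume inst: "pricing_instance G"
  have "finite (SIGMA k:comms G. bsol G k)"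
    using inst bsol_fin[OF inst] by (intro finite_SigmaI) (auto simp: pricing_instance_def)
  moreover have "finite (tolled G)" using inst
    by (metis finite_subset pricing_instance_def psubset_imp_subset)
  ultimately show ?thesis unfolding J2_def by blast
qed

lemma lpl_J2_unit:
  assumes inst: "pricing_instance G" and a: "a \<in> tolled G"
  shows "lpl (comms G <+> tolled G) (\<lambda>i. if i = Inr a then -1 else 0) u = - u (Inr a)"
proof -
  have fC: "finite (comms G)" and fT: "finite (tolled G)" using inst
    by (auto simp: pricing_instance_def intro: finite_subset)
  have "lpl (comms G <+> tolled G) (\<lambda>i. if i = Inr a then -1 else 0) u
      = lpl (tolled G) (\<lambda>a'. if a' = a then -1 else 0) (tv u)"
    using fC fT by (simp add: lpl_Plus) (simp add: lpl_def tv_def)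
  also have "\<dots> = - u (Inr a)" using lpl_unit[OF fT a] by (simp add: tv_def)
  finally show ?thesis .
qed

lemma lpl_J2_ky:
  assumes inst: "pricing_instance G" and k: "k \<in> comms G"
  shows "lpl (comms G <+> tolled G)
     (\<lambda>i. case i of Inl k' \<Rightarrow> (if k' = k then 1 else 0) | Inr a \<Rightarrow> - y a) u
     = u (Inl k) - toll G (tv u) y"
proof -
  have fC: "finite (comms G)" and fT: "finite (tolled G)" using inst
    by (auto simp: pricing_instance_def intro: finite_subset)
  have "(\<Sum>k'\<in>comms G. (if k' = k then 1 else 0) * u (Inl k')) = (\<Sum>k'\<in>comms G. if k' = k then u (Inl k') else 0)"
    by (rule sum.cong) auto
  also have "\<dots> = u (Inl k)" using fC k by (simp add: sum.delta)
  finally have 1: "(\<Sum>k'\<in>comms G. (if k' = k then 1 else 0) * u (Inl k')) = u (Inl k)" .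
  have 2: "(\<Sum>a\<in>tolled G. - y a * u (Inr a)) = - toll G (tv u) y"
    unfolding toll_def tv_def by (simp add: sum_negf mult.commute)
  show ?thesis using fC fT 1 2 by (simp add: lpl_Plus)
qed

lemma toll_aggr: "finite (comms G) \<Longrightarrow> toll G t (aggr G x) = (\<Sum>k\<in>comms G. toll G t (x k))"
  unfolding toll_def aggr_def by (simp add: sum_distrib_left sum.swap[of _ "tolled G"])

lemma feas2:
  assumes inst: "pricing_instance G"
  shows "lpfeas (comms G <+> tolled G) (J2 G) u \<longleftrightarrow>
    (\<forall>i. i \<notin> comms G <+> tolled G \<longrightarrow> u i = 0) \<and> nonneg_toll G (tv u) \<and>
    (\<forall>k\<in>comms G. \<forall>y\<in>bsol G k. u (Inl k) \<le> ccost G y + toll G (tv u) y)"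
proof -
  have A: "(\<forall>hr\<in>(\<lambda>a. (\<lambda>i. if i = Inr a then -1 else 0, 0)) ` tolled G.
             lpl (comms G <+> tolled G) (fst hr) u \<le> snd hr) \<longleftrightarrow> nonneg_toll G (tv u)"
    using lpl_J2_unit[OF inst] by (auto simp: nonneg_toll_def tv_def)
  have B: "(\<forall>hr\<in>(\<lambda>ky. (\<lambda>i. case i of Inl k' \<Rightarrow> (if k' = fst ky then 1 else 0) | Inr a \<Rightarrow> - snd ky a,
                ccost G (snd ky))) ` (SIGMA k:comms G. bsol G k).
             lpl (comms G <+> tolled G) (fst hr) u \<le> snd hr) \<longleftrightarrow>
      (\<forall>k\<in>comms G. \<forall>y\<in>bsol G k. u (Inl k) \<le> ccost G y + toll G (tv u) y)"
    by (auto simp: lpl_J2_ky[OF inst] algebra_simps)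
  show ?thesis unfolding lpfeas_def J2_def ball_Un A B by blast
qed

lemma sum_minf: "finite A \<Longrightarrow> A \<noteq> {} \<Longrightarrow> (\<Sum>x\<in>A. (-\<infinity>::ereal)) = -\<infinity>"
  by (induction A rule: finite_ne_induct) auto

lemma sum_eq_iff_le:
  fixes a b :: "'k \<Rightarrow> real"
  assumes "finite A" "\<forall>k\<in>A. a k \<le> b k"
  shows "(\<Sum>k\<in>A. a k) = (\<Sum>k\<in>A. b k) \<longleftrightarrow> (\<forall>k\<in>A. a k = b k)"
proof -
  have "(\<Sum>k\<in>A. a k) = (\<Sum>k\<in>A. b k) \<longleftrightarrow> (\<Sum>k\<in>A. b k - a k) = 0"
    by (auto simp: sum_subtractf)
  also have "\<dots> \<longleftrightarrow> (\<forall>k\<in>A. b k - a k = 0)"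
    using assms by (intro sum_nonneg_eq_0_iff) auto
  finally show ?thesis by auto
qed



lemma dual_attained:
  assumes inst: "pricing_instance G" and X: "\<forall>k\<in>comms G. x k \<in> flows G k"
  shows "\<exists>ts. nonneg_toll G ts \<and> (\<forall>t. nonneg_toll G t \<longrightarrow>
     (\<Sum>k\<in>comms G. mval G k t) - toll G t (aggr G x) \<le> (\<Sum>k\<in>comms G. mval G k ts) - toll G ts (aggr G x))"
proof -
  let ?C = "comms G" and ?T = "tolled G" and ?w = "aggr G x"
  let ?I = "?C <+> ?T"
  have fC: "finite ?C" and fT: "finite ?T" and TA: "?T \<subseteq> arcs G" using inst
    by (auto simp: pricing_instance_def intro: finite_subset)
  define p :: "'c + 'b \<Rightarrow> real" where "p = (\<lambda>i. case i of Inl k \<Rightarrow> 1 | Inr a \<Rightarrow> - ?w a)"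
  have lp: "lpl ?I p u = (\<Sum>k\<in>?C. u (Inl k)) - toll G (tv u) ?w" for u
  proof -
    have "(\<Sum>a\<in>?T. - ?w a * u (Inr a)) = - toll G (tv u) ?w"
      unfolding toll_def tv_def by (simp add: sum_negf mult.commute)
    then show ?thesis using fC fT by (simp add: lpl_Plus p_def)
  qed
  have bne: "bsol G k \<noteq> {}" if "k \<in> ?C" for k
    using mval(3)[OF inst X[rule_format, OF that], of "\<lambda>a. 0"] by (auto simp: nonneg_toll_def)
  have pointed: "d = (\<lambda>i. 0)" if dz: "\<forall>i. i \<notin> ?I \<longrightarrow> d i = 0"
      and dJ: "\<forall>hr\<in>J2 G. lpl ?I (fst hr) d = 0" for d
  proof -
    have dT: "d (Inr a) = 0" if a: "a \<in> ?T" for a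
    proof -
      have "(\<lambda>i. if i = Inr a then -1 else 0, 0) \<in> J2 G" using a unfolding J2_def by blast
      then have "lpl ?I (\<lambda>i. if i = Inr a then -1 else 0) d = 0" using dJ by fastforce
      then show ?thesis using lpl_J2_unit[OF inst a] by simp
    qed
    have dC: "d (Inl k) = 0" if k: "k \<in> ?C" for k
    proof -
      obtain y where y: "y \<in> bsol G k" using bne[OF k] by blast
      have "((\<lambda>i. case i of Inl k' \<Rightarrow> (if k' = k then 1 else 0) | Inr a \<Rightarrow> - y a), ccost G y) \<in> J2 G"
        using k y unfolding J2_def by (intro UnI2 image_eqI[where x="(k,y)"]) auto
      then have "lpl ?I (\<lambda>i. case i of Inl k' \<Rightarrow> (if k' = k then 1 else 0) | Inr a \<Rightarrow> - y a) d = 0"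
        using dJ by fastforce
      moreover have "toll G (tv d) y = 0" unfolding toll_def tv_def using dT by simp
      ultimately show ?thesis using lpl_J2_ky[OF inst k] by simp
    qed
    have "d i = 0" for i
    proof (cases i)
      case (Inl k) then show ?thesis using dC dz by (cases "k \<in> ?C") auto
    next
      case (Inr a) then show ?thesis using dT dz by (cases "a \<in> ?T") auto
    qed
    then show ?thesis by (simp add: fun_eq_iff)
  qed
  have mle: "u (Inl k) \<le> mval G k (tv u)" if f: "lpfeas ?I (J2 G) u" and k: "k \<in> ?C" for u k
  proof -
    have nn: "nonneg_toll G (tv u)" using f feas2[OF inst] by blast
    obtain y where y: "y \<in> bsol G k" "mval G k (tv u) = ccost G y + toll G (tv u) y"
      using mval(3)[OF inst X[rule_format, OF k] nn] by blast
    then show ?thesis using f feas2[OF inst] k by auto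
  qed
  have bnd: "lpl ?I p u \<le> (\<Sum>k\<in>?C. ccost G (x k))" if f: "lpfeas ?I (J2 G) u" for u
  proof -
    have nn: "nonneg_toll G (tv u)" using f feas2[OF inst] by blast
    have "(\<Sum>k\<in>?C. u (Inl k)) \<le> (\<Sum>k\<in>?C. ccost G (x k) + toll G (tv u) (x k))"
    proof (rule sum_mono)
      fix k assume k: "k \<in> ?C"
      show "u (Inl k) \<le> ccost G (x k) + toll G (tv u) (x k)"
        using mle[OF f k] mval(2)[OF inst X[rule_format, OF k] nn X[rule_format, OF k]] by simp
    qed
    then show ?thesis unfolding lp toll_aggr[OF fC] by (simp add: sum.distrib)
  qed
  have u0: "lpfeas ?I (J2 G) (\<lambda>i. 0)"
  proof -
    have "0 \<le> ccost G y + toll G (tv (\<lambda>i. 0)) y" if "k \<in> ?C" "y \<in> bsol G k" for k y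
    proof -
      have "y \<in> flows G k" using that bsol_sub[OF inst] by blast
      then show ?thesis using ccost_nonneg[OF inst] by (simp add: toll_def tv_def)
    qed
    then show ?thesis unfolding feas2[OF inst] by (simp add: nonneg_toll_def tv_def)
  qed
  obtain us where us: "lpfeas ?I (J2 G) us" and usmax: "\<And>v. lpfeas ?I (J2 G) v \<Longrightarrow> lpl ?I p v \<le> lpl ?I p us"
    using lp_max[OF J2_finite[OF inst] pointed bnd u0] by blast
  define ts where "ts = tv us"
  have tsn: "nonneg_toll G ts" using us feas2[OF inst] by (simp add: ts_def)
  have "(\<Sum>k\<in>?C. mval G k t) - toll G t ?w \<le> (\<Sum>k\<in>?C. mval G k ts) - toll G ts ?w"
    if t: "nonneg_toll G t" for t
  proof -
    define ut :: "'c + 'b \<Rightarrow> real" where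
      "ut = (\<lambda>i. case i of Inl k \<Rightarrow> if k \<in> ?C then mval G k t else 0 | Inr a \<Rightarrow> if a \<in> ?T then t a else 0)"
    have tollut: "toll G (tv ut) y = toll G t y" for y
      unfolding toll_def tv_def ut_def by (rule sum.cong) auto
    have "lpfeas ?I (J2 G) ut"
      unfolding feas2[OF inst]
    proof (intro conjI)
      show "\<forall>i. i \<notin> ?I \<longrightarrow> ut i = 0" by (auto simp: ut_def split: sum.split)
      show "nonneg_toll G (tv ut)" using t by (simp add: nonneg_toll_def tv_def ut_def)
      show "\<forall>k\<in>?C. \<forall>y\<in>bsol G k. ut (Inl k) \<le> ccost G y + toll G (tv ut) y"
      proof (intro ballI)
        fix k y assume k: "k \<in> ?C" and y: "y \<in> bsol G k"
        have "y \<in> flows G k" using y bsol_sub[OF inst] by blast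
        moreover have "ut (Inl k) = mval G k t" using k by (simp add: ut_def)
        ultimately show "ut (Inl k) \<le> ccost G y + toll G (tv ut) y"
          using mval(2)[OF inst X[rule_format, OF k] t] by (simp add: tollut)
      qed
    qed
    then have "lpl ?I p ut \<le> lpl ?I p us" by (rule usmax)
    moreover have "lpl ?I p ut = (\<Sum>k\<in>?C. mval G k t) - toll G t ?w"
      unfolding lp tollut by (simp add: ut_def)
    moreover have "lpl ?I p us \<le> (\<Sum>k\<in>?C. mval G k ts) - toll G ts ?w"
      unfolding lp ts_def using mle[OF us] by (simp add: sum_mono)
    ultimately show ?thesis by simp
  qed
  then show ?thesis using tsn by blast
qed



theorem proposition5:
  fixes G :: "('v,'a,'k) net" and x :: "'k \<Rightarrow> 'a \<Rightarrow> real"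
  assumes inst: "pricing_instance G"
    and X: "\<forall>k\<in>comms G. x k \<in> flows G k"
  shows "(bilevel_feasible G x
            \<longleftrightarrow> ereal (\<Sum>k\<in>comms G. ccost G (x k)) = gg G (aggr G x))
       \<and> (ereal (\<Sum>k\<in>comms G. ccost G (x k)) = gg G (aggr G x)
            \<longleftrightarrow> (\<forall>k\<in>comms G. indiv_bilevel_feasible G k (x k)) \<and>
                gg G (aggr G x) = (\<Sum>k\<in>comms G. gk G k (x k)))
       \<and> ((\<forall>k\<in>comms G. indiv_bilevel_feasible G k (x k)) \<and>
                gg G (aggr G x) = (\<Sum>k\<in>comms G. gk G k (x k))
            \<longleftrightarrow> (\<exists>t. nonneg_toll G t \<and>
                   ff G t = ereal (\<Sum>k\<in>comms G. ccost G (x k) + toll G t (x k))))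
       \<and> ((\<exists>t. nonneg_toll G t \<and>
                   ff G t = ereal (\<Sum>k\<in>comms G. ccost G (x k) + toll G t (x k)))
            \<longleftrightarrow> (\<exists>t. nonneg_toll G t \<and>
                   (\<forall>k\<in>comms G. fk G k t = ereal (ccost G (x k) + toll G t (x k)))))"
proof -
  let ?C = "comms G" and ?w = "aggr G x"
  define W where "W = (\<Sum>k\<in>?C. ccost G (x k))"
  have fC: "finite ?C" using inst by (simp add: pricing_instance_def)
  have xk: "x k \<in> flows G k" if "k \<in> ?C" for k using X that by blast
  have fkm: "fk G k t = ereal (mval G k t)" if "k \<in> ?C" "nonneg_toll G t" for k t
    using mval(1)[OF inst xk[OF that(1)] that(2)] .
  have mle: "mval G k t \<le> ccost G (x k) + toll G t (x k)" if "k \<in> ?C" "nonneg_toll G t" for k t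
    using mval(2)[OF inst xk[OF that(1)] that(2) xk[OF that(1)]] .
  have fkneg: "fk G k t = -\<infinity>" if "\<not> nonneg_toll G t" for k t
    using that by (simp add: fk_def)
  have ffm: "ff G t = ereal (\<Sum>k\<in>?C. mval G k t)" if "nonneg_toll G t" for t
  proof -
    have "ff G t = (\<Sum>k\<in>?C. ereal (mval G k t))"
      unfolding ff_def using fkm that by (intro sum.cong) auto
    then show ?thesis by simp
  qed
  have ffneg: "ff G t = -\<infinity>" if "\<not> nonneg_toll G t" "?C \<noteq> {}" for t
    unfolding ff_def using fkneg[OF that(1)] sum_minf[OF fC that(2)] by simp
  have empty: "?w = (\<lambda>a. 0)" "W = 0" "ff G t = 0" if "?C = {}" for t
    using that by (auto simp: aggr_def W_def ff_def)
  have tollw: "toll G t ?w = (\<Sum>k\<in>?C. toll G t (x k))" for t by (rule toll_aggr[OF fC])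
  have sumsplit: "(\<Sum>k\<in>?C. ccost G (x k) + toll G t (x k)) = W + toll G t ?w" for t
    unfolding tollw W_def by (simp add: sum.distrib)
  have phi_le: "ff G t - ereal (toll G t ?w) \<le> ereal W" for t
  proof (cases "nonneg_toll G t")
    case True
    have "(\<Sum>k\<in>?C. mval G k t) \<le> (\<Sum>k\<in>?C. ccost G (x k) + toll G t (x k))"
      using mle True by (intro sum_mono) auto
    then show ?thesis using ffm[OF True] sumsplit[of t] by simp
  next
    case False
    show ?thesis
    proof (cases "?C = {}")
      case True then show ?thesis using empty by (simp add: toll_def)
    next
      case ne: False then show ?thesis using ffneg[OF False ne] by simp
    qed
  qed
  have gg_le: "gg G ?w \<le> ereal W" unfolding gg_def using phi_le by (intro SUP_least) auto
  define D where "D = (\<exists>t. nonneg_toll G t \<and> ff G t = ereal (\<Sum>k\<in>?C. ccost G (x k) + toll G t (x k)))"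
  define E where "E = (\<exists>t. nonneg_toll G t \<and> (\<forall>k\<in>?C. fk G k t = ereal (ccost G (x k) + toll G t (x k))))"
  define B where "B = (ereal W = gg G ?w)"
  have DB: "D \<Longrightarrow> B"
  proof -
    assume D
    then obtain t where t: "nonneg_toll G t" "ff G t = ereal (\<Sum>k\<in>?C. ccost G (x k) + toll G t (x k))"
      unfolding D_def by blast
    have "ff G t - ereal (toll G t ?w) = ereal W" using t(2) sumsplit[of t] by simp
    moreover have "ff G t - ereal (toll G t ?w) \<le> gg G ?w" unfolding gg_def by (rule SUP_upper) simp
    ultimately show B unfolding B_def using gg_le by simp
  qed
  have BD: "B \<Longrightarrow> D"
  proof -
    assume B
    obtain ts where ts: "nonneg_toll G ts" and tsmax: "\<And>t. nonneg_toll G t \<Longrightarrow>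
      (\<Sum>k\<in>?C. mval G k t) - toll G t ?w \<le> (\<Sum>k\<in>?C. mval G k ts) - toll G ts ?w"
      using dual_attained[OF inst X] by blast
    define M where "M = (\<Sum>k\<in>?C. mval G k ts) - toll G ts ?w"
    have "gg G ?w \<le> ereal M" unfolding gg_def
    proof (rule SUP_least)
      fix t
      show "ff G t - ereal (toll G t ?w) \<le> ereal M"
      proof (cases "nonneg_toll G t")
        case True then show ?thesis using tsmax[OF True] ffm[OF True] by (simp add: M_def)
      next
        case False
        show ?thesis
        proof (cases "?C = {}")
          case True then show ?thesis using empty by (simp add: toll_def M_def)
        next
          case ne: False then show ?thesis using ffneg[OF False ne] by simp
        qed
      qed
    qed
    then have "W \<le> M" using \<open>B\<close> unfolding B_def by (metis ereal_less_eq(3))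
    moreover have "(\<Sum>k\<in>?C. mval G k ts) \<le> (\<Sum>k\<in>?C. ccost G (x k) + toll G ts (x k))"
      using mle ts by (intro sum_mono) auto
    ultimately have "(\<Sum>k\<in>?C. mval G k ts) = (\<Sum>k\<in>?C. ccost G (x k) + toll G ts (x k))"
      using sumsplit[of ts] unfolding M_def by simp
    then show D unfolding D_def using ts ffm[OF ts] by auto
  qed
  have DE: "D \<longleftrightarrow> E"
  proof -
    have "ff G t = ereal (\<Sum>k\<in>?C. ccost G (x k) + toll G t (x k)) \<longleftrightarrow>
          (\<forall>k\<in>?C. fk G k t = ereal (ccost G (x k) + toll G t (x k)))" if t: "nonneg_toll G t" for t
    proof -
      have "ff G t = ereal (\<Sum>k\<in>?C. ccost G (x k) + toll G t (x k)) \<longleftrightarrow>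
            (\<Sum>k\<in>?C. mval G k t) = (\<Sum>k\<in>?C. ccost G (x k) + toll G t (x k))"
        using ffm[OF t] by simp
      also have "\<dots> \<longleftrightarrow> (\<forall>k\<in>?C. mval G k t = ccost G (x k) + toll G t (x k))"
        using mle t fC by (intro sum_eq_iff_le) auto
      also have "\<dots> \<longleftrightarrow> (\<forall>k\<in>?C. fk G k t = ereal (ccost G (x k) + toll G t (x k)))"
        using fkm t by auto
      finally show ?thesis .
    qed
    then show ?thesis unfolding D_def E_def by blast
  qed
  have gk_le: "gk G k (x k) \<le> ereal (ccost G (x k))" if k: "k \<in> ?C" for k
    unfolding gk_def
  proof (rule SUP_least)
    fix t
    show "fk G k t - ereal (toll G t (x k)) \<le> ereal (ccost G (x k))"
    proof (cases "nonneg_toll G t")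
      case True then show ?thesis using fkm[OF k True] mle[OF k True] by simp
    next
      case False then show ?thesis using fkneg[OF False] by simp
    qed
  qed
  have gk_eq: "gk G k (x k) = ereal (ccost G (x k))"
    if k: "k \<in> ?C" and t: "nonneg_toll G t" and e: "fk G k t = ereal (ccost G (x k) + toll G t (x k))" for k t
  proof -
    have "fk G k t - ereal (toll G t (x k)) \<le> gk G k (x k)" unfolding gk_def by (rule SUP_upper) simp
    then have "ereal (ccost G (x k)) \<le> gk G k (x k)" using e by simp
    then show ?thesis using gk_le[OF k] by simp
  qed
  have indiv: "indiv_bilevel_feasible G k (x k) \<longleftrightarrow>
      (\<exists>t. nonneg_toll G t \<and> fk G k t = ereal (ccost G (x k) + toll G t (x k)))" if k: "k \<in> ?C" for k
  proof
    assume H: "indiv_bilevel_feasible G k (x k)"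
    then obtain t z where tz: "- fk G k t \<le> ereal z" "z = - ccost G (x k) - toll G t (x k)"
      unfolding indiv_bilevel_feasible_def epi_neg_fk_def by blast
    have t: "nonneg_toll G t"
    proof (rule ccontr)
      assume "\<not> nonneg_toll G t"
      then show False using tz(1) fkneg by simp
    qed
    have "mval G k t \<ge> ccost G (x k) + toll G t (x k)" using tz fkm[OF k t] by simp
    then have "fk G k t = ereal (ccost G (x k) + toll G t (x k))" using mle[OF k t] fkm[OF k t] by simp
    then show "\<exists>t. nonneg_toll G t \<and> fk G k t = ereal (ccost G (x k) + toll G t (x k))" using t by blast
  next
    assume "\<exists>t. nonneg_toll G t \<and> fk G k t = ereal (ccost G (x k) + toll G t (x k))"
    then obtain t where t: "nonneg_toll G t" "fk G k t = ereal (ccost G (x k) + toll G t (x k))" by blast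
    have sub: "epi_neg_fk G k \<subseteq> {(t, z). z \<ge> - ccost G (x k) - toll G t (x k)}"
    proof
      fix tz assume "tz \<in> epi_neg_fk G k"
      then obtain t' z where tz: "tz = (t', z)" "- fk G k t' \<le> ereal z" unfolding epi_neg_fk_def by blast
      have t': "nonneg_toll G t'"
      proof (rule ccontr)
        assume "\<not> nonneg_toll G t'"
        then show False using tz(2) fkneg by simp
      qed
      have "- mval G k t' \<le> z" using tz(2) fkm[OF k t'] by simp
      then show "tz \<in> {(t, z). z \<ge> - ccost G (x k) - toll G t (x k)}" using tz(1) mle[OF k t'] by simp
    qed
    have "(t, - ccost G (x k) - toll G t (x k)) \<in> epi_neg_fk G k \<inter> {(t, z). z = - ccost G (x k) - toll G t (x k)}"
      using t(2) unfolding epi_neg_fk_def by simp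
    then show "indiv_bilevel_feasible G k (x k)" unfolding indiv_bilevel_feasible_def using xk[OF k] sub by blast
  qed
  have sumgk: "(\<Sum>k\<in>?C. gk G k (x k)) = ereal W" if "\<forall>k\<in>?C. gk G k (x k) = ereal (ccost G (x k))"
  proof -
    have "(\<Sum>k\<in>?C. gk G k (x k)) = (\<Sum>k\<in>?C. ereal (ccost G (x k)))" using that by (intro sum.cong) auto
    then show ?thesis by (simp add: W_def)
  qed
  define Cc where "Cc = ((\<forall>k\<in>?C. indiv_bilevel_feasible G k (x k)) \<and> gg G ?w = (\<Sum>k\<in>?C. gk G k (x k)))"
  have EC: "E \<Longrightarrow> B \<Longrightarrow> Cc"
  proof -
    assume E B
    then obtain t where t: "nonneg_toll G t" "\<forall>k\<in>?C. fk G k t = ereal (ccost G (x k) + toll G t (x k))"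
      unfolding E_def by blast
    have "\<forall>k\<in>?C. indiv_bilevel_feasible G k (x k)" using indiv t by blast
    moreover have "\<forall>k\<in>?C. gk G k (x k) = ereal (ccost G (x k))" using gk_eq t by blast
    ultimately show Cc unfolding Cc_def using sumgk \<open>B\<close> unfolding B_def by simp
  qed
  have CB: "Cc \<Longrightarrow> B"
  proof -
    assume Cc
    have "\<forall>k\<in>?C. gk G k (x k) = ereal (ccost G (x k))"
    proof
      fix k assume k: "k \<in> ?C"
      then have "indiv_bilevel_feasible G k (x k)" using \<open>Cc\<close> unfolding Cc_def by blast
      then show "gk G k (x k) = ereal (ccost G (x k))" using indiv[OF k] gk_eq[OF k] by blast
    qed
    then show B using \<open>Cc\<close> sumgk unfolding Cc_def B_def by simp
  qed
  have A: "bilevel_feasible G x \<longleftrightarrow> B" unfolding bilevel_feasible_def B_def W_def using X by simp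
  have "B \<longleftrightarrow> Cc" using BD DE EC CB by blast
  moreover have "Cc \<longleftrightarrow> D" using BD DB CB DE EC by blast
  ultimately show ?thesis using A DE unfolding B_def Cc_def D_def E_def W_def by blast
qed


end
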